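(* Let $T>0$, $0<\eta<T$, $0<\alpha<\frac{1}{\eta}$, let $f\in C([0,\infty),[0,\infty))$, and let $a\in C([0,T],[0,\infty))$ with $a(t_0)>0$ for some $t_0\in[0,T]$. Consider the boundary value problem \[ u''(t)+a(t)f(u(t))=0,\quad 0<t<T,\qquad u'(0)=0,\quad u(T)=\alpha\int_0^{\eta}u(s)\,ds. \tag{P} \] Assume that $f_0=\alpha_1\in[0,\theta_1\Lambda_1)$ for some $\theta_1\in(0,1]$, and $f_\infty=\beta_1\in\left(\frac{\theta_2}{\gamma}\Lambda_2,\infty\right)$ for some $\theta_2\ge1$. Then (P) has at least one positive solution.
   Context: $f_0=\lim_{u\to0^+}\frac{f(u)}{u}$, $f_\infty=\lim_{u\to\infty}\frac{f(u)}{u}$ (assumed to exist with the stated values; $\alpha_1,\beta_1$ are just names for these limits). $\gamma=\dfrac{\alpha\eta(T-\eta)}{T-\alpha\eta^2}$, $\Lambda_1=\dfrac{1-\alpha\eta}{\int_0^T (T-s)a(s)\,ds}$, and $\Lambda_2=\dfrac{1-\alpha\eta}{\gamma\left(\int_\eta^T (T-s)a(s)\,ds+\frac12\int_0^\eta\left[2(T-\eta)+\alpha(\eta^2-s^2)\right]a(s)\,ds\right)}$. A positive solution of (P) is a function $u\in C^2([0,T])$ satisfying (P) with $u(t)\ge0$ on $[0,T]$ and $u$ not identically zero. *)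

theory Defs
  imports "HOL-Analysis.Analysis"
begin

definition gamma_c :: "real \<Rightarrow> real \<Rightarrow> real \<Rightarrow> real" where
  "gamma_c T \<eta> \<alpha> = \<alpha> * \<eta> * (T - \<eta>) / (T - \<alpha> * \<eta>^2)"

definition Lambda1 :: "real \<Rightarrow> real \<Rightarrow> real \<Rightarrow> (real \<Rightarrow> real) \<Rightarrow> real" where
  "Lambda1 T \<eta> \<alpha> a = (1 - \<alpha> * \<eta>) / integral {0..T} (\<lambda>s. (T - s) * a s)"

definition Lambda2 :: "real \<Rightarrow> real \<Rightarrow> real \<Rightarrow> (real \<Rightarrow> real) \<Rightarrow> real" where
  "Lambda2 T \<eta> \<alpha> a = (1 - \<alpha> * \<eta>) /
     (gamma_c T \<eta> \<alpha> * (integral {\<eta>..T} (\<lambda>s. (T - s) * a s)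
        + 1/2 * integral {0..\<eta>} (\<lambda>s. (2 * (T - \<eta>) + \<alpha> * (\<eta>^2 - s^2)) * a s)))"

definition C2_with :: "real \<Rightarrow> (real \<Rightarrow> real) \<Rightarrow> (real \<Rightarrow> real) \<Rightarrow> (real \<Rightarrow> real) \<Rightarrow> bool" where
  "C2_with T u u1 u2 \<longleftrightarrow>
     (\<forall>t\<in>{0..T}. (u has_real_derivative u1 t) (at t within {0..T})) \<and>
     (\<forall>t\<in>{0..T}. (u1 has_real_derivative u2 t) (at t within {0..T})) \<and>
     continuous_on {0..T} u2"

definition positive_solution_P ::
  "real \<Rightarrow> real \<Rightarrow> real \<Rightarrow> (real \<Rightarrow> real) \<Rightarrow> (real \<Rightarrow> real) \<Rightarrow> (real \<Rightarrow> real) \<Rightarrow> bool" where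
  "positive_solution_P T \<eta> \<alpha> a f u \<longleftrightarrow>
     (\<exists>u1 u2. C2_with T u u1 u2 \<and>
        (\<forall>t. 0 < t \<and> t < T \<longrightarrow> u2 t + a t * f (u t) = 0) \<and>
        u1 0 = 0 \<and>
        u T = \<alpha> * integral {0..\<eta>} u) \<and>
     (\<forall>t\<in>{0..T}. u t \<ge> 0) \<and> (\<exists>t\<in>{0..T}. u t \<noteq> 0)"

end

theory Submission
  imports Defs "HOL-Complex_Analysis.Great_Picard"
begin


definition Ii :: "(real \<Rightarrow> real) \<Rightarrow> real \<Rightarrow> real" where
  "Ii y t = integral {0..t} y"
definition Pp :: "(real \<Rightarrow> real) \<Rightarrow> real \<Rightarrow> real" where
  "Pp y t = t * Ii y t - Ii (\<lambda>s. s * y s) t"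
definition Qq :: "(real \<Rightarrow> real) \<Rightarrow> real \<Rightarrow> real" where
  "Qq y t = (t * t * Ii y t - 2 * (t * Ii (\<lambda>s. s * y s) t) + Ii (\<lambda>s. s^2 * y s) t) / 2"

lemma Ii_neg: "t \<le> 0 \<Longrightarrow> Ii y t = 0"
  by (cases "t = 0") (auto simp: Ii_def)

lemma Pp_neg: "t \<le> 0 \<Longrightarrow> Pp y t = 0" by (simp add: Pp_def Ii_neg)
lemma Qq_zero: "Qq y 0 = 0" by (simp add: Qq_def Ii_neg)

lemma Pp_clamp: "Pp y t = Pp y (max 0 t)"
  by (cases "t \<le> 0") (auto simp: Pp_neg max_def)

lemma cont_int: fixes y :: "real \<Rightarrow> real" assumes "continuous_on {0..T} y" "t \<le> T" shows "y integrable_on {0..t}"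
  by (rule integrable_continuous_interval, rule continuous_on_subset[OF assms(1)]) (use assms in auto)

lemma cont_s: fixes y :: "real \<Rightarrow> real" assumes "continuous_on {0..T} y" shows "continuous_on {0..T} (\<lambda>s. s * y s)"
  by (intro continuous_intros assms)
lemma cont_s2: fixes y :: "real \<Rightarrow> real" assumes "continuous_on {0..T} y" shows "continuous_on {0..T} (\<lambda>s. s^2 * y s)"
  by (intro continuous_intros assms)

lemma Ii_deriv: "continuous_on {0..T} y \<Longrightarrow> t \<in> {0..T} \<Longrightarrow> (Ii y has_real_derivative y t) (at t within {0..T})"
  unfolding Ii_def by (rule integral_has_real_derivative)

lemma Pp_deriv:
  assumes "continuous_on {0..T} y" "t \<in> {0..T}"
  shows "(Pp y has_real_derivative Ii y t) (at t within {0..T})"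
proof -
  have 1: "(Ii y has_real_derivative y t) (at t within {0..T})" using Ii_deriv assms by blast
  have 2: "(Ii (\<lambda>s. s * y s) has_real_derivative t * y t) (at t within {0..T})"
    using Ii_deriv[OF cont_s[OF assms(1)] assms(2)] by simp
  have "((\<lambda>t. t * Ii y t - Ii (\<lambda>s. s * y s) t) has_real_derivative Ii y t) (at t within {0..T})"
    by (auto intro!: derivative_eq_intros 1 2)
  then show ?thesis unfolding Pp_def[abs_def] .
qed

lemma Qq_deriv:
  assumes "continuous_on {0..T} y" "t \<in> {0..T}"
  shows "(Qq y has_real_derivative Pp y t) (at t within {0..T})"
proof -
  have 1: "(Ii y has_real_derivative y t) (at t within {0..T})" using Ii_deriv assms by blast
  have 2: "(Ii (\<lambda>s. s * y s) has_real_derivative t * y t) (at t within {0..T})"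
    using Ii_deriv[OF cont_s[OF assms(1)] assms(2)] by simp
  have 3: "(Ii (\<lambda>s. s^2 * y s) has_real_derivative t^2 * y t) (at t within {0..T})"
    using Ii_deriv[OF cont_s2[OF assms(1)] assms(2)] by simp
  have "((\<lambda>t. (t * t * Ii y t - 2 * (t * Ii (\<lambda>s. s * y s) t) + Ii (\<lambda>s. s^2 * y s) t) / 2) has_real_derivative
     ((1 * t + 1 * t) * Ii y t + y t * (t * t) - 2 * (1 * Ii (\<lambda>s. s * y s) t + t * y t * t) + t^2 * y t) / 2) (at t within {0..T})"
    by (intro DERIV_cdivide DERIV_add DERIV_diff DERIV_mult DERIV_cmult DERIV_ident 1 2 3)
  then have "((\<lambda>t. (t * t * Ii y t - 2 * (t * Ii (\<lambda>s. s * y s) t) + Ii (\<lambda>s. s^2 * y s) t) / 2) has_real_derivative Pp y t) (at t within {0..T})"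
    by (rule DERIV_cong) (simp add: Pp_def power2_eq_square field_simps)
  then show ?thesis unfolding Qq_def[abs_def] .
qed

lemma Int_Pp:
  assumes "continuous_on {0..T} y" "0 \<le> e" "e \<le> T"
  shows "integral {0..e} (Pp y) = Qq y e"
proof -
  have "(Pp y has_integral (Qq y e - Qq y 0)) {0..e}"
  proof (rule fundamental_theorem_of_calculus)
    fix x assume "x \<in> {0..e}"
    then have "(Qq y has_real_derivative Pp y x) (at x within {0..T})"
      using assms by (intro Qq_deriv) auto
    then have "(Qq y has_real_derivative Pp y x) (at x within {0..e})"
      by (rule DERIV_subset) (use assms in auto)
    then show "(Qq y has_vector_derivative Pp y x) (at x within {0..e})"
      by (simp add: has_real_derivative_iff_has_vector_derivative)
  qed (use assms in auto)
  then show ?thesis by (simp add: integral_unique Qq_zero)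
qed

lemma Pp_int:
  assumes "continuous_on {0..T} y" "t \<le> T"
  shows "Pp y t = integral {0..t} (\<lambda>s. (t - s) * y s)"
proof -
  have i1: "y integrable_on {0..t}" using cont_int assms by blast
  have i2: "(\<lambda>s. s * y s) integrable_on {0..t}" using cont_int[OF cont_s[OF assms(1)] assms(2)] .
  have "integral {0..t} (\<lambda>s. (t - s) * y s) = integral {0..t} (\<lambda>s. t * y s - s * y s)"
    by (simp add: algebra_simps)
  also have "\<dots> = integral {0..t} (\<lambda>s. t * y s) - integral {0..t} (\<lambda>s. s * y s)"
    by (rule integral_diff) (use i1 i2 integrable_on_mult_right in auto)
  finally show ?thesis by (simp add: Pp_def Ii_def)
qed

lemma Ii_cong: "(\<And>s. s \<in> {0..t} \<Longrightarrow> y s = z s) \<Longrightarrow> Ii y t = Ii z t"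
  unfolding Ii_def by (rule integral_cong)

lemma Pp_cong: "(\<And>s. s \<in> {0..t} \<Longrightarrow> y s = z s) \<Longrightarrow> Pp y t = Pp z t"
  unfolding Pp_def by (metis (no_types, lifting) Ii_cong)

lemma Pp_diff:
  assumes "continuous_on {0..T} y" "continuous_on {0..T} z" "t \<le> T"
  shows "Pp (\<lambda>s. y s - z s) t = Pp y t - Pp z t"
proof -
  have "Ii (\<lambda>s. y s - z s) t = Ii y t - Ii z t"
    unfolding Ii_def by (rule integral_diff) (use cont_int assms in blast)+
  moreover have "Ii (\<lambda>s. s * (y s - z s)) t = Ii (\<lambda>s. s * y s) t - Ii (\<lambda>s. s * z s) t"
    unfolding Ii_def right_diff_distrib
    by (rule integral_diff) (use cont_int cont_s assms in blast)+
  ultimately show ?thesis unfolding Pp_def by (simp only:) (simp add: algebra_simps)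
qed

lemma Pp_nonneg:
  assumes "continuous_on {0..T} y" "\<And>s. s \<in> {0..T} \<Longrightarrow> y s \<ge> 0" "t \<le> T"
  shows "Pp y t \<ge> 0"
proof -
  have "continuous_on {0..T} (\<lambda>s. (t - s) * y s)" using assms(1) by (intro continuous_intros)
  then have int: "(\<lambda>s. (t - s) * y s) integrable_on {0..t}" using cont_int assms(3) by blast
  have "0 \<le> integral {0..t} (\<lambda>s. (t - s) * y s)"
  proof (rule integral_nonneg[OF int])
    fix x assume x: "x \<in> {0..t}"
    then have "y x \<ge> 0" using assms(2,3) by auto
    moreover have "t - x \<ge> 0" using x by auto
    ultimately show "0 \<le> (t - x) * y x" by (rule mult_nonneg_nonneg[rotated])
  qed
  then show ?thesis using Pp_int[OF assms(1,3)] by simp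
qed

lemma Pp_mono:
  assumes "continuous_on {0..T} y" "\<And>s. s \<in> {0..T} \<Longrightarrow> y s \<ge> 0" "t \<le> t'" "t' \<le> T"
  shows "Pp y t \<le> Pp y t'"
proof -
  have c1: "continuous_on {0..T} (\<lambda>s. (t - s) * y s)" using assms(1) by (intro continuous_intros)
  have c2: "continuous_on {0..T} (\<lambda>s. (t' - s) * y s)" using assms(1) by (intro continuous_intros)
  have tT: "t \<le> T" using assms by linarith
  have "integral {0..t} (\<lambda>s. (t - s) * y s) \<le> integral {0..t} (\<lambda>s. (t' - s) * y s)"
  proof (rule integral_le)
    show "(\<lambda>s. (t - s) * y s) integrable_on {0..t}" using cont_int[OF c1 tT] .
    show "(\<lambda>s. (t' - s) * y s) integrable_on {0..t}" using cont_int[OF c2 tT] .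
    fix x assume x: "x \<in> {0..t}"
    then have "y x \<ge> 0" using assms(2) tT by auto
    then show "(t - x) * y x \<le> (t' - x) * y x" using assms(3) by (intro mult_right_mono) auto
  qed
  also have "\<dots> \<le> integral {0..t'} (\<lambda>s. (t' - s) * y s)"
  proof (rule integral_subset_le)
    show "{0..t} \<subseteq> {0..t'}" using assms(3) by auto
    show "(\<lambda>s. (t' - s) * y s) integrable_on {0..t}" using cont_int[OF c2 tT] .
    show "(\<lambda>s. (t' - s) * y s) integrable_on {0..t'}" using cont_int[OF c2 assms(4)] .
    show "\<forall>x\<in>{0..t'}. 0 \<le> (t' - x) * y x"
    proof
      fix x assume x: "x \<in> {0..t'}"
      then have "y x \<ge> 0" using assms(2,4) by auto
      then show "0 \<le> (t' - x) * y x" using x by (intro mult_nonneg_nonneg) auto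
    qed
  qed
  finally show ?thesis using Pp_int[OF assms(1) tT] Pp_int[OF assms(1,4)] by simp
qed

lemma Pp_lip:
  assumes "continuous_on {0..T} y" "\<And>s. s \<in> {0..T} \<Longrightarrow> \<bar>y s\<bar> \<le> B" "t \<in> {0..T}" "t' \<in> {0..T}"
  shows "\<bar>Pp y t - Pp y t'\<bar> \<le> T * B * \<bar>t - t'\<bar>"
proof -
  have "norm (Pp y t - Pp y t') \<le> (T * B) * norm (t - t')"
  proof (rule field_differentiable_bound[of "{0..T}"])
    fix z assume z: "z \<in> {0..T}"
    show "(Pp y has_field_derivative Ii y z) (at z within {0..T})" using Pp_deriv assms z by blast
    have "norm (integral {0..z} y) \<le> B * (z - 0)"
    proof (rule integral_bound)
      show "continuous_on {0..z} y" by (rule continuous_on_subset[OF assms(1)]) (use z in auto)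
    qed (use z assms in auto)
    moreover have "B \<ge> 0" using assms(2)[of 0] assms(3) by auto
    moreover have "B * z \<le> B * T" using z \<open>B \<ge> 0\<close> by (intro mult_left_mono) auto
    ultimately show "norm (Ii y z) \<le> T * B" unfolding Ii_def by (simp add: mult.commute)
  qed (use assms in auto)
  then show ?thesis by simp
qed

lemma Pp_bound:
  assumes "continuous_on {0..T} y" "\<And>s. s \<in> {0..T} \<Longrightarrow> \<bar>y s\<bar> \<le> B" "t \<in> {0..T}"
  shows "\<bar>Pp y t\<bar> \<le> T * B * t"
  using Pp_lip[OF assms(1,2,3), of 0] assms(3) by (auto simp: Pp_neg)

lemma Pp_lip2:
  assumes "continuous_on {0..T} y" "\<And>s. s \<in> {0..T} \<Longrightarrow> \<bar>y s\<bar> \<le> B" "t \<le> T" "t' \<le> T" "T \<ge> 0"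
  shows "\<bar>Pp y t - Pp y t'\<bar> \<le> T * B * \<bar>t - t'\<bar>"
proof -
  have B: "B \<ge> 0" using assms(2)[of 0] assms(5) by auto
  have "\<bar>Pp y (max 0 t) - Pp y (max 0 t')\<bar> \<le> T * B * \<bar>max 0 t - max 0 t'\<bar>"
    by (rule Pp_lip[OF assms(1,2)]) (use assms(3,4,5) in auto)
  also have "\<dots> \<le> T * B * \<bar>t - t'\<bar>"
  proof (rule mult_left_mono)
    show "\<bar>max 0 t - max 0 t'\<bar> \<le> \<bar>t - t'\<bar>" by (simp add: max_def abs_if)
    show "0 \<le> T * B" using B assms(5) by simp
  qed
  finally show ?thesis by (metis Pp_clamp)
qed



lemma integral_pos_cont:
  fixes g :: "real \<Rightarrow> real"
  assumes "continuous_on {p..q} g" "\<And>x. x \<in> {p..q} \<Longrightarrow> g x \<ge> 0" "x1 \<in> {p..q}" "g x1 > 0" "p < q"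
  shows "integral {p..q} g > 0"
proof -
  have int: "g integrable_on {p..q}" using assms(1) by (rule integrable_continuous_interval)
  have ge: "integral {p..q} g \<ge> 0" by (rule integral_nonneg[OF int]) (use assms(2) in auto)
  show ?thesis
  proof (rule ccontr)
    assume "\<not> ?thesis"
    then have "integral {p..q} g = 0" using ge by simp
    then have h0: "(g has_integral 0) (cbox p q)" using int by (metis box_real(2) has_integral_integrable_integral)
    have c: "continuous_on (cbox p q) g" using assms(1) by (simp add: box_real)
    have "g x1 = 0"
      by (rule has_integral_0_cbox_imp_0[OF c _ h0]) (use assms in \<open>auto simp: box_real\<close>)
    then show False using assms(4) by simp
  qed
qed

definition lipT :: "real \<Rightarrow> real \<Rightarrow> (real \<Rightarrow> real) \<Rightarrow> bool" where
  "lipT T L u \<longleftrightarrow> (\<forall>t t'. t \<le> T \<longrightarrow> t' \<le> T \<longrightarrow> \<bar>u t - u t'\<bar> \<le> L * \<bar>t - t'\<bar>)"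

lemma lipT_cont: assumes "lipT T L u" "L \<ge> 0" shows "continuous_on {..T} u"
proof -
  have "L-lipschitz_on {..T} u" using assms unfolding lipT_def lipschitz_on_def dist_real_def by auto
  then show ?thesis by (rule lipschitz_on_continuous_on)
qed

locale bvp =
  fixes T \<eta> \<alpha> :: real and a f :: "real \<Rightarrow> real" and R :: real
  assumes T: "T > 0" and eta: "0 < \<eta>" "\<eta> < T" and alpha: "0 < \<alpha>" "\<alpha> * \<eta> < 1"
    and fc: "continuous_on {0..} f" and fpos: "\<And>x. x \<ge> 0 \<Longrightarrow> f x \<ge> 0"
    and ac: "continuous_on {0..T} a" and apos: "\<And>t. t \<in> {0..T} \<Longrightarrow> a t \<ge> 0"
    and R: "R > 0"
begin

definition F :: "real \<Rightarrow> real" where "F x = f (max 0 (min R x))"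

lemma F_cont: "continuous_on UNIV F"
proof -
  have "continuous_on UNIV (\<lambda>x. max 0 (min R x :: real))" by (intro continuous_intros)
  moreover have "(\<lambda>x. max 0 (min R x :: real)) ` UNIV \<subseteq> {0..}" by auto
  ultimately show ?thesis unfolding F_def[abs_def] by (rule continuous_on_compose2[OF fc])
qed

lemma F_nonneg: "F x \<ge> 0" unfolding F_def by (rule fpos) simp

lemma F_eq: "0 \<le> x \<Longrightarrow> x \<le> R \<Longrightarrow> F x = f x" unfolding F_def by (simp add: max_def min_def)

lemma F_bounded: "\<exists>M>0. \<forall>x. F x \<le> M"
proof -
  have "compact (f ` {0..R})"
    by (rule compact_continuous_image) (auto intro: continuous_on_subset[OF fc])
  then obtain B where B: "\<forall>z\<in>f ` {0..R}. norm z \<le> B" using compact_imp_bounded bounded_iff by metis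
  have "F x \<le> max B 1" for x
  proof -
    have "max 0 (min R x) \<in> {0..R}" using R by auto
    then have "\<bar>F x\<bar> \<le> B" using B unfolding F_def by auto
    then show ?thesis by auto
  qed
  then show ?thesis by (intro exI[of _ "max B 1"]) auto
qed

definition Mf where "Mf = (SOME M. M > 0 \<and> (\<forall>x. F x \<le> M))"
lemma Mf: "Mf > 0" "F x \<le> Mf"
  using someI_ex[OF F_bounded] unfolding Mf_def by auto

lemma a_bounded: "\<exists>A>0. \<forall>t\<in>{0..T}. a t \<le> A"
proof -
  have "compact (a ` {0..T})" by (rule compact_continuous_image[OF ac]) auto
  then obtain B where B: "\<forall>z\<in>a ` {0..T}. norm z \<le> B" using compact_imp_bounded bounded_iff by metis
  then show ?thesis by (intro exI[of _ "max B 1"]) force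
qed

definition A where "A = (SOME A. A > 0 \<and> (\<forall>t\<in>{0..T}. a t \<le> A))"
lemma A: "A > 0" "t \<in> {0..T} \<Longrightarrow> a t \<le> A"
  using someI_ex[OF a_bounded] unfolding A_def by auto

lemma F_uc: assumes "e > 0" shows "\<exists>d>0. \<forall>x x'. \<bar>x - x'\<bar> < d \<longrightarrow> \<bar>F x - F x'\<bar> < e"
proof -
  have "uniformly_continuous_on {0..R} f"
    by (rule compact_uniformly_continuous) (auto intro: continuous_on_subset[OF fc])
  then obtain d where d: "d > 0" "\<forall>x\<in>{0..R}. \<forall>x'\<in>{0..R}. dist x' x < d \<longrightarrow> dist (f x') (f x) < e"
    using assms unfolding uniformly_continuous_on_def by metis
  have "\<bar>F x - F x'\<bar> < e" if "\<bar>x - x'\<bar> < d" for x x'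
  proof -
    have 1: "max 0 (min R x) \<in> {0..R}" "max 0 (min R x') \<in> {0..R}" using R by auto
    have "\<bar>max 0 (min R x) - max 0 (min R x')\<bar> \<le> \<bar>x - x'\<bar>" by (simp add: max_def min_def abs_if)
    then have "dist (max 0 (min R x)) (max 0 (min R x')) < d" using that by (simp add: dist_real_def)
    then show ?thesis using d(2) 1 unfolding F_def dist_real_def by blast
  qed
  then show ?thesis using d(1) by blast
qed

definition Lc where "Lc = T * (A * Mf)"
lemma Lc: "Lc \<ge> 0" unfolding Lc_def using T A Mf by simp

lemma y_cont:
  assumes "lipT T L u" "L \<ge> 0" "h \<ge> 0"
  shows "continuous_on {0..T} (\<lambda>s. a s * F (u (s - h)))"
proof -
  have cu: "continuous_on {..T} u" using lipT_cont assms by blast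
  have "continuous_on {0..T} (\<lambda>s. u (s - h))"
    by (rule continuous_on_compose2[OF cu]) (use assms(3) in \<open>auto intro!: continuous_intros\<close>)
  then have "continuous_on {0..T} (\<lambda>s. F (u (s - h)))"
    by (rule continuous_on_compose2[OF F_cont]) auto
  then show ?thesis using ac by (intro continuous_intros)
qed

lemma y_bound: "s \<in> {0..T} \<Longrightarrow> \<bar>a s * F x\<bar> \<le> A * Mf"
proof -
  assume s: "s \<in> {0..T}"
  have "a s * F x \<le> A * Mf" by (rule mult_mono) (use s A Mf apos F_nonneg in auto)
  moreover have "a s * F x \<ge> 0" using apos[OF s] F_nonneg by simp
  ultimately show ?thesis by simp
qed

lemma y_nonneg: "s \<in> {0..T} \<Longrightarrow> a s * F x \<ge> 0"
  using apos F_nonneg by simp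

lemma Pp_lipT:
  assumes "continuous_on {0..T} y" "\<And>s. s \<in> {0..T} \<Longrightarrow> \<bar>y s\<bar> \<le> A * Mf"
  shows "lipT T Lc (\<lambda>t. c - Pp y t)"
  unfolding lipT_def Lc_def
proof (intro allI impI)
  fix t t' :: real assume "t \<le> T" "t' \<le> T"
  then have "\<bar>Pp y t' - Pp y t\<bar> \<le> T * (A * Mf) * \<bar>t' - t\<bar>" using Pp_lip2[OF assms] T by simp
  then show "\<bar>c - Pp y t - (c - Pp y t')\<bar> \<le> T * (A * Mf) * \<bar>t - t'\<bar>" by (simp add: abs_minus_commute)
qed

primrec w :: "nat \<Rightarrow> real \<Rightarrow> real \<Rightarrow> real \<Rightarrow> real" where
  "w 0 h c = (\<lambda>t. c)"
| "w (Suc j) h c = (\<lambda>t. c - Pp (\<lambda>s. a s * F (w j h c (s - h))) t)"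

lemma w_lip: "h \<ge> 0 \<Longrightarrow> lipT T Lc (w j h c)"
proof (induction j)
  case 0 then show ?case using Lc by (simp add: lipT_def)
next
  case (Suc j)
  have "continuous_on {0..T} (\<lambda>s. a s * F (w j h c (s - h)))" using y_cont Suc Lc by blast
  then show ?case using Pp_lipT y_bound by simp
qed

lemma w_neg: "t \<le> 0 \<Longrightarrow> w j h c t = c"
  by (cases j) (auto simp: Pp_neg)

lemma w_stab: "h > 0 \<Longrightarrow> t \<le> real j * h \<Longrightarrow> w (Suc j) h c t = w j h c t"
proof (induction j arbitrary: t)
  case 0 then show ?case by (simp add: Pp_neg)
next
  case (Suc j)
  have "Pp (\<lambda>s. a s * F (w (Suc j) h c (s - h))) t = Pp (\<lambda>s. a s * F (w j h c (s - h))) t"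
  proof (rule Pp_cong)
    fix s assume "s \<in> {0..t}"
    then have "s - h \<le> real j * h" using Suc.prems by (simp add: algebra_simps)
    then show "a s * F (w (Suc j) h c (s - h)) = a s * F (w j h c (s - h))" using Suc.IH Suc.prems by simp
  qed
  then show ?case by simp
qed

definition Sol :: "real \<Rightarrow> real \<Rightarrow> (real \<Rightarrow> real) \<Rightarrow> bool" where
  "Sol h c u \<longleftrightarrow> lipT T Lc u \<and> (\<forall>t\<le>0. u t = c) \<and>
     (\<forall>t\<in>{0..T}. u t = c - Pp (\<lambda>s. a s * F (u (s - h))) t)"

lemma w_Sol:
  assumes "N \<ge> 1" "h = T / real N"
  shows "Sol h c (w (Suc N) h c)"
proof -
  have h: "h > 0" using assms T by simp
  have Nh: "real N * h = T" using assms by simp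
  have "w (Suc N) h c t = c - Pp (\<lambda>s. a s * F (w (Suc N) h c (s - h))) t" if "t \<in> {0..T}" for t
  proof -
    have "Pp (\<lambda>s. a s * F (w (Suc N) h c (s - h))) t = Pp (\<lambda>s. a s * F (w N h c (s - h))) t"
    proof (rule Pp_cong)
      fix s assume "s \<in> {0..t}"
      then have "s - h \<le> real N * h" using that h Nh by auto
      then show "a s * F (w (Suc N) h c (s - h)) = a s * F (w N h c (s - h))" using w_stab[OF h] by simp
    qed
    then show ?thesis by simp
  qed
  moreover have "lipT T Lc (w (Suc N) h c)" by (rule w_lip) (use h in simp)
  moreover have "\<forall>t\<le>0. w (Suc N) h c t = c" using w_neg by blast
  ultimately show ?thesis unfolding Sol_def by blast
qed

lemma w_ccont:
  assumes "h \<ge> 0" "e > 0"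
  shows "\<exists>d>0. \<forall>c'. \<bar>c' - c\<bar> < d \<longrightarrow> (\<forall>t\<le>T. \<bar>w j h c' t - w j h c t\<bar> < e)"
  using assms(2)
proof (induction j arbitrary: e)
  case 0 then show ?case by auto
next
  case (Suc j)
  define \<rho> where "\<rho> = e / (2 * (T * T * A + 1))"
  have TTA: "T * T * A \<ge> 0" using T A by simp
  have rho: "\<rho> > 0" unfolding \<rho>_def using Suc.prems TTA by (intro divide_pos_pos) auto
  have rho2: "T * T * (A * \<rho>) < e / 2"
  proof -
    have "T * T * (A * \<rho>) = (T * T * A) * e / (2 * (T * T * A + 1))" unfolding \<rho>_def by simp
    also have "\<dots> < (T * T * A + 1) * e / (2 * (T * T * A + 1))"
      using Suc.prems TTA by (intro divide_strict_right_mono mult_strict_right_mono) auto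
    also have "\<dots> = e / 2" using TTA by (simp add: field_simps)
    finally show ?thesis .
  qed
  obtain d1 where d1: "d1 > 0" "\<forall>x x'. \<bar>x - x'\<bar> < d1 \<longrightarrow> \<bar>F x - F x'\<bar> < \<rho>" using F_uc[OF rho] by blast
  obtain d2 where d2: "d2 > 0" "\<forall>c'. \<bar>c' - c\<bar> < d2 \<longrightarrow> (\<forall>t\<le>T. \<bar>w j h c' t - w j h c t\<bar> < d1)"
    using Suc.IH[OF d1(1)] by blast
  show ?case
  proof (intro exI[of _ "min d2 (e/2)"] conjI allI impI)
    show "0 < min d2 (e / 2)" using d2 Suc.prems by simp
    fix c' t assume c': "\<bar>c' - c\<bar> < min d2 (e / 2)" and t: "t \<le> T"
    define y' where "y' = (\<lambda>s. a s * F (w j h c' (s - h)))"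
    define y where "y = (\<lambda>s. a s * F (w j h c (s - h)))"
    have cy': "continuous_on {0..T} y'" unfolding y'_def using y_cont w_lip assms(1) Lc by blast
    have cy: "continuous_on {0..T} y" unfolding y_def using y_cont w_lip assms(1) Lc by blast
    have bd: "\<bar>y' s - y s\<bar> \<le> A * \<rho>" if s: "s \<in> {0..T}" for s
    proof -
      have "\<bar>w j h c' (s - h) - w j h c (s - h)\<bar> < d1" using d2(2) c' s assms(1) by auto
      then have "\<bar>F (w j h c' (s - h)) - F (w j h c (s - h))\<bar> < \<rho>" using d1 by blast
      then have "\<bar>a s\<bar> * \<bar>F (w j h c' (s - h)) - F (w j h c (s - h))\<bar> \<le> A * \<rho>"
        using A apos s by (intro mult_mono) auto
      then show ?thesis unfolding y'_def y_def by (simp add: abs_mult right_diff_distrib[symmetric])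
    qed
    have "\<bar>Pp (\<lambda>s. y' s - y s) t\<bar> < e / 2"
    proof (cases "t \<le> 0")
      case True then show ?thesis using Suc.prems by (simp add: Pp_neg)
    next
      case False
      then have "\<bar>Pp (\<lambda>s. y' s - y s) t\<bar> \<le> T * (A * \<rho>) * t"
        using Pp_bound[of T "\<lambda>s. y' s - y s" "A * \<rho>" t] cy cy' bd t by (auto intro!: continuous_intros)
      also have "\<dots> \<le> T * (A * \<rho>) * T" using t T A rho by (intro mult_left_mono) auto
      also have "\<dots> < e / 2" using rho2 by (simp add: algebra_simps)
      finally show ?thesis .
    qed
    moreover have "Pp (\<lambda>s. y' s - y s) t = Pp y' t - Pp y t" using Pp_diff[OF cy' cy t] .
    ultimately have "\<bar>Pp y' t - Pp y t\<bar> < e / 2" by simp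
    moreover have "\<bar>c' - c\<bar> < e / 2" using c' by simp
    ultimately have "\<bar>(c' - Pp y' t) - (c - Pp y t)\<bar> < e" by arith
    then show "\<bar>w (Suc j) h c' t - w (Suc j) h c t\<bar> < e"
      unfolding y'_def y_def by simp
  qed
qed

end


lemma Pp_has_int:
  assumes "continuous_on {0..T} y" "0 \<le> e" "e \<le> T"
  shows "(Pp y has_integral Qq y e) {0..e}"
proof -
  have "(Pp y has_integral (Qq y e - Qq y 0)) {0..e}"
  proof (rule fundamental_theorem_of_calculus)
    fix x assume "x \<in> {0..e}"
    then have "(Qq y has_real_derivative Pp y x) (at x within {0..T})"
      using assms by (intro Qq_deriv) auto
    then have "(Qq y has_real_derivative Pp y x) (at x within {0..e})"
      by (rule DERIV_subset) (use assms in auto)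
    then show "(Qq y has_vector_derivative Pp y x) (at x within {0..e})"
      by (simp add: has_real_derivative_iff_has_vector_derivative)
  qed (use assms in auto)
  then show ?thesis by (simp add: Qq_zero)
qed

lemma poly_int:
  assumes "continuous_on {0..T} y" "t \<le> T"
  shows "integral {0..t} (\<lambda>s. (p + q * s + r * s^2) * y s) = p * Ii y t + q * Ii (\<lambda>s. s * y s) t + r * Ii (\<lambda>s. s^2 * y s) t"
proof -
  have i0: "y integrable_on {0..t}" using cont_int assms by blast
  have i1: "(\<lambda>s. s * y s) integrable_on {0..t}" using cont_int[OF cont_s[OF assms(1)] assms(2)] .
  have i2: "(\<lambda>s. s^2 * y s) integrable_on {0..t}" using cont_int[OF cont_s2[OF assms(1)] assms(2)] .
  have j0: "(\<lambda>s. p * y s) integrable_on {0..t}" using i0 by (rule integrable_on_mult_right)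
  have j1: "(\<lambda>s. q * (s * y s)) integrable_on {0..t}" using i1 by (rule integrable_on_mult_right)
  have j2: "(\<lambda>s. r * (s^2 * y s)) integrable_on {0..t}" using i2 by (rule integrable_on_mult_right)
  have "integral {0..t} (\<lambda>s. (p + q * s + r * s^2) * y s) = integral {0..t} (\<lambda>s. (p * y s + q * (s * y s)) + r * (s^2 * y s))"
    by (rule integral_cong) (simp add: algebra_simps)
  also have "\<dots> = integral {0..t} (\<lambda>s. p * y s + q * (s * y s)) + integral {0..t} (\<lambda>s. r * (s^2 * y s))"
    by (rule integral_add) (use j0 j1 j2 integrable_add in blast)+
  also have "integral {0..t} (\<lambda>s. p * y s + q * (s * y s)) = integral {0..t} (\<lambda>s. p * y s) + integral {0..t} (\<lambda>s. q * (s * y s))"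
    by (rule integral_add) (use j0 j1 in blast)+
  finally show ?thesis by (simp add: Ii_def)
qed

context bvp begin

definition gS :: "(real \<Rightarrow> real) \<Rightarrow> real" where
  "gS u = u T - \<alpha> * integral {0..\<eta>} u"

lemma Sol_y:
  assumes "Sol h c u" "h \<ge> 0"
  shows "continuous_on {0..T} (\<lambda>s. a s * F (u (s - h)))"
  using assms y_cont Lc unfolding Sol_def by blast

lemma Sol_cont: "Sol h c u \<Longrightarrow> continuous_on {..T} u"
  using lipT_cont Lc unfolding Sol_def by blast

lemma Sol_int: assumes "Sol h c u" shows "u integrable_on {0..\<eta>}"
  by (rule integrable_continuous_interval, rule continuous_on_subset[OF Sol_cont[OF assms]]) (use eta in auto)

lemma Sol_le_c:
  assumes "Sol h c u" "h \<ge> 0" "t \<le> T"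
  shows "u t \<le> c"
proof (cases "t \<le> 0")
  case True then show ?thesis using assms(1) unfolding Sol_def by simp
next
  case False
  have "Pp (\<lambda>s. a s * F (u (s - h))) t \<ge> 0"
    by (rule Pp_nonneg[OF Sol_y[OF assms(1,2)] _ assms(3)]) (rule y_nonneg)
  then show ?thesis using assms False unfolding Sol_def by auto
qed

lemma Sol_mono:
  assumes "Sol h c u" "h \<ge> 0" "t \<le> t'" "t' \<le> T"
  shows "u t' \<le> u t"
proof (cases "t \<le> 0")
  case True
  then have "u t = c" using assms(1) unfolding Sol_def by simp
  then show ?thesis using Sol_le_c[OF assms(1,2,4)] by simp
next
  case False
  have "Pp (\<lambda>s. a s * F (u (s - h))) t \<le> Pp (\<lambda>s. a s * F (u (s - h))) t'"
    by (rule Pp_mono[OF Sol_y[OF assms(1,2)] _ assms(3,4)]) (rule y_nonneg)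
  moreover have "t \<in> {0..T}" "t' \<in> {0..T}" using False assms by auto
  ultimately show ?thesis using assms(1) unfolding Sol_def by auto
qed

lemma Sol_intlow:
  assumes "Sol h c u" "h \<ge> 0"
  shows "integral {0..\<eta>} u \<ge> \<eta> * u \<eta>"
proof -
  have "integral {0..\<eta>} (\<lambda>_. u \<eta>) \<le> integral {0..\<eta>} u"
  proof (rule integral_le)
    show "(\<lambda>_. u \<eta>) integrable_on {0..\<eta>}" by (rule integrable_continuous_interval) (rule continuous_on_const)
    show "u integrable_on {0..\<eta>}" by (rule Sol_int[OF assms(1)])
    fix x assume "x \<in> {0..\<eta>}"
    then show "u \<eta> \<le> u x" using Sol_mono[OF assms(1,2), of x \<eta>] eta by auto
  qed
  then show ?thesis using eta by simp
qed

lemma Sol_pos: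
  assumes "Sol h c u" "h \<ge> 0" "gS u \<ge> 0"
  shows "u T \<ge> 0" "\<And>t. t \<le> T \<Longrightarrow> u t \<ge> u T"
proof -
  have i: "integral {0..\<eta>} u \<ge> \<eta> * u \<eta>" by (rule Sol_intlow[OF assms(1,2)])
  have f1: "\<alpha> * integral {0..\<eta>} u \<ge> \<alpha> * (\<eta> * u \<eta>)" using i alpha by (intro mult_left_mono) auto
  have "u \<eta> \<ge> u T" using Sol_mono[OF assms(1,2)] eta by auto
  then have "\<eta> * u \<eta> \<ge> \<eta> * u T" using eta by (intro mult_left_mono) auto
  then have f2: "\<alpha> * (\<eta> * u \<eta>) \<ge> (\<alpha> * \<eta>) * u T" using alpha by (simp add: mult.assoc mult_left_mono)
  have g: "u T - \<alpha> * integral {0..\<eta>} u \<ge> 0" using assms(3) unfolding gS_def .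
  show "u T \<ge> 0"
  proof (rule ccontr)
    assume "\<not> u T \<ge> 0"
    then have "(1 - \<alpha> * \<eta>) * u T < 0" using alpha by (intro mult_pos_neg) auto
    then have "u T - (\<alpha> * \<eta>) * u T < 0" by (simp add: left_diff_distrib)
    then show False using f1 f2 g by linarith
  qed
  show "\<And>t. t \<le> T \<Longrightarrow> u t \<ge> u T" using Sol_mono[OF assms(1,2)] by auto
qed

lemma Sol_small:
  assumes "Sol h c u" "h \<ge> 0" "0 < c" "c \<le> R" "k \<ge> 0"
    and fk: "\<And>z. z \<in> {0..c} \<Longrightarrow> f z \<le> k * z"
    and kK: "k * integral {0..T} (\<lambda>s. (T - s) * a s) < 1 - \<alpha> * \<eta>"
  shows "gS u > 0"
proof -
  define K1 where "K1 = integral {0..T} (\<lambda>s. (T - s) * a s)"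
  define y where "y = (\<lambda>s. a s * F (u (s - h)))"
  have cy: "continuous_on {0..T} y" unfolding y_def by (rule Sol_y[OF assms(1,2)])
  have yle: "y s \<le> a s * (k * c)" if s: "s \<in> {0..T}" for s
  proof -
    have "u (s - h) \<le> c" using Sol_le_c[OF assms(1,2)] s assms(2) by auto
    then have z: "max 0 (min R (u (s - h))) \<in> {0..c}" using assms(3,4) by auto
    then have "F (u (s - h)) \<le> k * max 0 (min R (u (s - h)))" unfolding F_def using fk by blast
    also have "\<dots> \<le> k * c" using z assms(5) by (intro mult_left_mono) auto
    finally show ?thesis unfolding y_def using apos[OF s] by (intro mult_left_mono) auto
  qed
  have "Pp y T = integral {0..T} (\<lambda>s. (T - s) * y s)" using Pp_int[OF cy] by simp
  also have "\<dots> \<le> integral {0..T} (\<lambda>s. (T - s) * a s * (k * c))"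
  proof (rule integral_le)
    show "(\<lambda>s. (T - s) * y s) integrable_on {0..T}"
      by (rule integrable_continuous_interval) (use cy in \<open>intro continuous_intros\<close>)
    show "(\<lambda>s. (T - s) * a s * (k * c)) integrable_on {0..T}"
      by (rule integrable_continuous_interval) (use ac in \<open>intro continuous_intros\<close>)
    fix s assume s: "s \<in> {0..T}"
    then have "(T - s) * y s \<le> (T - s) * (a s * (k * c))" using yle[OF s] by (intro mult_left_mono) auto
    then show "(T - s) * y s \<le> (T - s) * a s * (k * c)" by (simp add: mult.assoc)
  qed
  also have "\<dots> = K1 * (k * c)" unfolding K1_def by simp
  finally have P: "Pp y T \<le> K1 * (k * c)" .
  have uT: "u T = c - Pp y T" using assms(1) T unfolding Sol_def y_def by auto
  have "integral {0..\<eta>} u \<le> integral {0..\<eta>} (\<lambda>_. c)"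
  proof (rule integral_le)
    show "u integrable_on {0..\<eta>}" by (rule Sol_int[OF assms(1)])
    show "(\<lambda>_. c) integrable_on {0..\<eta>}" by (rule integrable_continuous_interval) (rule continuous_on_const)
    fix x assume "x \<in> {0..\<eta>}"
    then show "u x \<le> c" using Sol_le_c[OF assms(1,2)] eta by auto
  qed
  then have "integral {0..\<eta>} u \<le> \<eta> * c" using eta by simp
  then have I: "\<alpha> * integral {0..\<eta>} u \<le> \<alpha> * (\<eta> * c)" using alpha by (intro mult_left_mono) auto
  have pos: "0 < c * (1 - \<alpha> * \<eta> - k * K1)" using assms(3) kK unfolding K1_def by (intro mult_pos_pos) auto
  have eq: "c * (1 - \<alpha> * \<eta> - k * K1) = c - \<alpha> * (\<eta> * c) - K1 * (k * c)" by (simp add: algebra_simps)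
  show ?thesis unfolding gS_def using pos eq I P uT by linarith
qed

end


context bvp begin

lemma Sol_large:
  assumes "Sol h c u" "h \<ge> 0" "0 < c" "c \<le> R" "M \<le> gamma_c T \<eta> \<alpha> * c" "b \<ge> 0"
    and fb: "\<And>z. z \<ge> M \<Longrightarrow> f z \<ge> b * z"
    and bE: "b * gamma_c T \<eta> \<alpha> * Ea > 1 - \<alpha> * \<eta>"
    and Ea: "Ea = integral {\<eta>..T} (\<lambda>s. (T - s) * a s) + 1/2 * integral {0..\<eta>} (\<lambda>s. (2 * (T - \<eta>) + \<alpha> * (\<eta>^2 - s^2)) * a s)"
  shows "gS u < 0"
proof (rule ccontr)
  assume "\<not> gS u < 0"
  then have g: "gS u \<ge> 0" by simp
  define \<gamma> where "\<gamma> = gamma_c T \<eta> \<alpha>"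
  define y where "y = (\<lambda>s. a s * F (u (s - h)))"
  have cy: "continuous_on {0..T} y" unfolding y_def by (rule Sol_y[OF assms(1,2)])
  have ynn: "\<And>s. s \<in> {0..T} \<Longrightarrow> y s \<ge> 0" unfolding y_def by (rule y_nonneg)
  have uT0: "u T \<ge> 0" and umin: "\<And>t. t \<le> T \<Longrightarrow> u t \<ge> u T" using Sol_pos[OF assms(1,2) g] by auto
  have ueq: "\<And>t. t \<in> {0..T} \<Longrightarrow> u t = c - Pp y t" using assms(1) unfolding Sol_def y_def by auto
  have eT: "\<eta> \<in> {0..T}" "T \<in> {0..T}" using eta T by auto
  have cTs: "continuous_on {0..T} (\<lambda>s. (T - s) * y s)" using cy by (intro continuous_intros)
  have conc: "T * Pp y \<eta> \<le> \<eta> * Pp y T"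
  proof -
    have "T * Pp y \<eta> = integral {0..\<eta>} (\<lambda>s. T * ((\<eta> - s) * y s))" using Pp_int[OF cy, of \<eta>] eta by simp
    also have "\<dots> \<le> integral {0..\<eta>} (\<lambda>s. \<eta> * ((T - s) * y s))"
    proof (rule integral_le)
      show "(\<lambda>s. T * ((\<eta> - s) * y s)) integrable_on {0..\<eta>}"
        by (rule cont_int[of T]) (use cy eta in \<open>auto intro!: continuous_intros\<close>)
      show "(\<lambda>s. \<eta> * ((T - s) * y s)) integrable_on {0..\<eta>}"
        by (rule cont_int[of T]) (use cy eta in \<open>auto intro!: continuous_intros\<close>)
      fix s assume s: "s \<in> {0..\<eta>}"
      then have ys: "y s \<ge> 0" using ynn eta by auto
      have "T * (\<eta> - s) \<le> \<eta> * (T - s)" using s eta by (simp add: algebra_simps mult_right_mono)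
      then have "T * (\<eta> - s) * y s \<le> \<eta> * (T - s) * y s" using ys by (rule mult_right_mono)
      then show "T * ((\<eta> - s) * y s) \<le> \<eta> * ((T - s) * y s)" by (simp add: mult.assoc)
    qed
    also have "\<dots> = \<eta> * integral {0..\<eta>} (\<lambda>s. (T - s) * y s)" by simp
    also have "\<dots> \<le> \<eta> * integral {0..T} (\<lambda>s. (T - s) * y s)"
    proof (rule mult_left_mono)
      show "integral {0..\<eta>} (\<lambda>s. (T - s) * y s) \<le> integral {0..T} (\<lambda>s. (T - s) * y s)"
      proof (rule integral_subset_le)
        show "{0..\<eta>} \<subseteq> {0..T}" using eta by auto
        show "(\<lambda>s. (T - s) * y s) integrable_on {0..\<eta>}" using cont_int[OF cTs] eta by simp
        show "(\<lambda>s. (T - s) * y s) integrable_on {0..T}" using cont_int[OF cTs] by simp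
        show "\<forall>x\<in>{0..T}. 0 \<le> (T - x) * y x" using ynn by auto
      qed
    qed (use eta in simp)
    also have "\<dots> = \<eta> * Pp y T" using Pp_int[OF cy, of T] by simp
    finally show ?thesis .
  qed
  have e1: "T * u \<eta> = T * c - T * Pp y \<eta>" by (subst ueq[OF eT(1)]) (simp add: algebra_simps)
  have e2: "(T - \<eta>) * c + \<eta> * u T = T * c - \<eta> * Pp y T" by (subst ueq[OF eT(2)]) (simp add: algebra_simps)
  have c1: "T * u \<eta> \<ge> (T - \<eta>) * c + \<eta> * u T" using conc e1 e2 by linarith
  have i: "integral {0..\<eta>} u \<ge> \<eta> * u \<eta>" by (rule Sol_intlow[OF assms(1,2)])
  have gg: "u T \<ge> \<alpha> * integral {0..\<eta>} u" using g unfolding gS_def by simp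
  have "\<alpha> * integral {0..\<eta>} u \<ge> \<alpha> * (\<eta> * u \<eta>)" using i alpha by (intro mult_left_mono) auto
  then have uTe: "u T \<ge> (\<alpha> * \<eta>) * u \<eta>" using gg by (simp add: mult.assoc)
  have "T * u T \<ge> T * ((\<alpha> * \<eta>) * u \<eta>)" using uTe T by (intro mult_left_mono) auto
  also have "T * ((\<alpha> * \<eta>) * u \<eta>) = (\<alpha> * \<eta>) * (T * u \<eta>)" by simp
  also have "(\<alpha> * \<eta>) * (T * u \<eta>) \<ge> (\<alpha> * \<eta>) * ((T - \<eta>) * c + \<eta> * u T)"
    using c1 alpha eta by (intro mult_left_mono) auto
  finally have "T * u T \<ge> (\<alpha> * \<eta>) * ((T - \<eta>) * c + \<eta> * u T)" .
  then have "u T * (T - \<alpha> * \<eta>^2) \<ge> \<alpha> * \<eta> * (T - \<eta>) * c" by (simp add: algebra_simps power2_eq_square)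
  moreover have den: "T - \<alpha> * \<eta>^2 > 0"
  proof -
    have "\<alpha> * \<eta>^2 = (\<alpha> * \<eta>) * \<eta>" by (simp add: power2_eq_square)
    also have "\<dots> < 1 * \<eta>" using alpha eta by (intro mult_strict_right_mono) auto
    finally show ?thesis using eta by simp
  qed
  ultimately have uTg: "u T \<ge> \<gamma> * c" unfolding \<gamma>_def gamma_c_def
    by (simp add: pos_divide_le_eq mult.commute mult.left_commute)
  have ylow: "y s \<ge> a s * (b * (\<gamma> * c))" if s: "s \<in> {0..T}" for s
  proof -
    have le: "u (s - h) \<le> c" using Sol_le_c[OF assms(1,2)] s assms(2) by auto
    have ge: "u (s - h) \<ge> \<gamma> * c" using umin[of "s - h"] s assms(2) uTg by auto
    then have geM: "u (s - h) \<ge> M" using assms(5) unfolding \<gamma>_def by linarith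
    have "u (s - h) \<ge> 0" using umin[of "s - h"] uT0 s assms(2) by auto
    then have "F (u (s - h)) = f (u (s - h))" using le assms(4) by (intro F_eq) auto
    also have "\<dots> \<ge> b * u (s - h)" using fb[OF geM] .
    also have "b * u (s - h) \<ge> b * (\<gamma> * c)" using ge assms(6) by (intro mult_left_mono) auto
    finally show ?thesis unfolding y_def using apos[OF s] by (intro mult_left_mono) auto
  qed
  define I0 where "I0 = Ii y \<eta>"
  define I1 where "I1 = Ii (\<lambda>s. s * y s) \<eta>"
  define I2 where "I2 = Ii (\<lambda>s. s^2 * y s) \<eta>"
  define Ey where "Ey = integral {\<eta>..T} (\<lambda>s. (T - s) * y s) + 1/2 * integral {0..\<eta>} (\<lambda>s. (2 * (T - \<eta>) + \<alpha> * (\<eta>^2 - s^2)) * y s)"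
  have intu: "integral {0..\<eta>} u = \<eta> * c - Qq y \<eta>"
  proof -
    have "integral {0..\<eta>} u = integral {0..\<eta>} (\<lambda>t. c - Pp y t)"
      by (rule integral_cong) (use ueq eta in auto)
    also have "\<dots> = integral {0..\<eta>} (\<lambda>t. c) - integral {0..\<eta>} (Pp y)"
      by (rule integral_diff) (use Pp_has_int[OF cy, of \<eta>] eta integrable_continuous_interval[OF continuous_on_const] in auto)
    also have "\<dots> = \<eta> * c - Qq y \<eta>" using Pp_has_int[OF cy, of \<eta>] eta by (simp add: integral_unique)
    finally show ?thesis .
  qed
  have splitT: "integral {\<eta>..T} (\<lambda>s. (T - s) * y s) = Pp y T - integral {0..\<eta>} (\<lambda>s. (T - s) * y s)"
  proof -
    have "integral {0..\<eta>} (\<lambda>s. (T - s) * y s) + integral {\<eta>..T} (\<lambda>s. (T - s) * y s) = integral {0..T} (\<lambda>s. (T - s) * y s)"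
      by (rule Henstock_Kurzweil_Integration.integral_combine) (use eta cont_int[OF cTs, of T] in auto)
    then show ?thesis using Pp_int[OF cy, of T] by simp
  qed
  have p1: "integral {0..\<eta>} (\<lambda>s. (T - s) * y s) = T * I0 - I1"
  proof -
    have "integral {0..\<eta>} (\<lambda>s. (T - s) * y s) = integral {0..\<eta>} (\<lambda>s. (T + (-1) * s + 0 * s^2) * y s)"
      by (rule integral_cong) simp
    also have "\<dots> = T * I0 + (-1) * I1 + 0 * I2"
      unfolding I0_def I1_def I2_def by (rule poly_int[OF cy]) (use eta in simp)
    finally show ?thesis by simp
  qed
  have p2: "integral {0..\<eta>} (\<lambda>s. (2 * (T - \<eta>) + \<alpha> * (\<eta>^2 - s^2)) * y s) = (2 * (T - \<eta>) + \<alpha> * \<eta>^2) * I0 - \<alpha> * I2"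
  proof -
    have "integral {0..\<eta>} (\<lambda>s. (2 * (T - \<eta>) + \<alpha> * (\<eta>^2 - s^2)) * y s) = integral {0..\<eta>} (\<lambda>s. ((2 * (T - \<eta>) + \<alpha> * \<eta>^2) + 0 * s + (- \<alpha>) * s^2) * y s)"
      by (rule integral_cong) (simp add: algebra_simps)
    also have "\<dots> = (2 * (T - \<eta>) + \<alpha> * \<eta>^2) * I0 + 0 * I1 + (- \<alpha>) * I2"
      unfolding I0_def I1_def I2_def by (rule poly_int[OF cy]) (use eta in simp)
    finally show ?thesis by simp
  qed
  have Peta: "Pp y \<eta> = \<eta> * I0 - I1" unfolding Pp_def I0_def I1_def ..
  have Qeta: "Qq y \<eta> = (\<eta> * \<eta> * I0 - 2 * (\<eta> * I1) + I2) / 2" unfolding Qq_def I0_def I1_def I2_def ..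
  have ident: "(1 - \<alpha> * \<eta>) * u \<eta> = gS u + Ey"
    unfolding gS_def Ey_def intu splitT p1 p2 ueq[OF eT(1)] ueq[OF eT(2)] Peta Qeta
    by (simp add: field_simps power2_eq_square)
  have ET: "integral {\<eta>..T} (\<lambda>s. (T - s) * y s) \<ge> integral {\<eta>..T} (\<lambda>s. (T - s) * a s * (b * (\<gamma> * c)))"
  proof (rule integral_le)
    show "(\<lambda>s. (T - s) * a s * (b * (\<gamma> * c))) integrable_on {\<eta>..T}"
      by (rule integrable_continuous_interval) (use ac eta in \<open>auto intro!: continuous_intros intro: continuous_on_subset\<close>)
    show "(\<lambda>s. (T - s) * y s) integrable_on {\<eta>..T}"
      by (rule integrable_continuous_interval, rule continuous_on_subset[OF cTs]) (use eta in auto)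
    fix s assume s: "s \<in> {\<eta>..T}"
    then have s': "s \<in> {0..T}" using eta by auto
    have "(T - s) * (a s * (b * (\<gamma> * c))) \<le> (T - s) * y s" using ylow[OF s'] s by (intro mult_left_mono) auto
    then show "(T - s) * a s * (b * (\<gamma> * c)) \<le> (T - s) * y s" by (simp add: mult.assoc)
  qed
  have E0: "integral {0..\<eta>} (\<lambda>s. (2 * (T - \<eta>) + \<alpha> * (\<eta>^2 - s^2)) * y s) \<ge> integral {0..\<eta>} (\<lambda>s. (2 * (T - \<eta>) + \<alpha> * (\<eta>^2 - s^2)) * a s * (b * (\<gamma> * c)))"
  proof (rule integral_le)
    show "(\<lambda>s. (2 * (T - \<eta>) + \<alpha> * (\<eta>^2 - s^2)) * a s * (b * (\<gamma> * c))) integrable_on {0..\<eta>}"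
      by (rule integrable_continuous_interval) (use ac eta in \<open>auto intro!: continuous_intros intro: continuous_on_subset\<close>)
    show "(\<lambda>s. (2 * (T - \<eta>) + \<alpha> * (\<eta>^2 - s^2)) * y s) integrable_on {0..\<eta>}"
      by (rule integrable_continuous_interval) (use cy eta in \<open>auto intro!: continuous_intros intro: continuous_on_subset\<close>)
    fix s assume s: "s \<in> {0..\<eta>}"
    then have s': "s \<in> {0..T}" using eta by auto
    have "s^2 \<le> \<eta>^2" using s by (intro power_mono) auto
    then have k0: "2 * (T - \<eta>) + \<alpha> * (\<eta>^2 - s^2) \<ge> 0" using eta alpha by (intro add_nonneg_nonneg mult_nonneg_nonneg) auto
    have "(2 * (T - \<eta>) + \<alpha> * (\<eta>^2 - s^2)) * (a s * (b * (\<gamma> * c))) \<le> (2 * (T - \<eta>) + \<alpha> * (\<eta>^2 - s^2)) * y s"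
      using ylow[OF s'] k0 by (intro mult_left_mono) auto
    then show "(2 * (T - \<eta>) + \<alpha> * (\<eta>^2 - s^2)) * a s * (b * (\<gamma> * c)) \<le> (2 * (T - \<eta>) + \<alpha> * (\<eta>^2 - s^2)) * y s"
      by (simp add: mult.assoc)
  qed
  define X where "X = b * (\<gamma> * c)"
  have r1: "integral {\<eta>..T} (\<lambda>s. (T - s) * a s * X) = integral {\<eta>..T} (\<lambda>s. (T - s) * a s) * X"
    by (rule integral_mult_left)
  have r2: "integral {0..\<eta>} (\<lambda>s. (2 * (T - \<eta>) + \<alpha> * (\<eta>^2 - s^2)) * a s * X) = integral {0..\<eta>} (\<lambda>s. (2 * (T - \<eta>) + \<alpha> * (\<eta>^2 - s^2)) * a s) * X"
    by (rule integral_mult_left)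
  have r3: "Ea * X = integral {\<eta>..T} (\<lambda>s. (T - s) * a s) * X + 1/2 * (integral {0..\<eta>} (\<lambda>s. (2 * (T - \<eta>) + \<alpha> * (\<eta>^2 - s^2)) * a s) * X)"
    unfolding Ea by (simp only: distrib_right mult.assoc)
  have "Ey \<ge> Ea * (b * (\<gamma> * c))"
    using ET E0 r1 r2 r3 unfolding Ey_def X_def[symmetric] by linarith
  moreover have "Ea * (b * (\<gamma> * c)) > (1 - \<alpha> * \<eta>) * c"
  proof -
    have "(1 - \<alpha> * \<eta>) * c < (b * \<gamma> * Ea) * c" using bE assms(3) unfolding \<gamma>_def by (intro mult_strict_right_mono) auto
    then show ?thesis by (simp add: algebra_simps)
  qed
  moreover have "(1 - \<alpha> * \<eta>) * u \<eta> \<le> (1 - \<alpha> * \<eta>) * c"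
    using Sol_le_c[OF assms(1,2)] eta alpha by (intro mult_left_mono) auto
  ultimately show False using ident g by linarith
qed

lemma g_cont:
  assumes "h \<ge> 0"
  shows "continuous_on S (\<lambda>c. gS (w j h c))"
  unfolding continuous_on_iff
proof (intro ballI allI impI)
  fix c e assume c: "c \<in> S" and e: "(0::real) < e"
  define e' where "e' = e / (2 * (\<alpha> * \<eta> + 1))"
  have ae: "\<alpha> * \<eta> \<ge> 0" using alpha eta by simp
  have e': "e' > 0" using e ae unfolding e'_def by (intro divide_pos_pos) auto
  obtain d where d: "d > 0" "\<forall>c'. \<bar>c' - c\<bar> < d \<longrightarrow> (\<forall>t\<le>T. \<bar>w j h c' t - w j h c t\<bar> < e')"
    using w_ccont[OF assms e'] by blast
  show "\<exists>d>0. \<forall>c'\<in>S. dist c' c < d \<longrightarrow> dist (gS (w j h c')) (gS (w j h c)) < e"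
  proof (intro exI[of _ d] conjI ballI impI)
    show "d > 0" by (rule d(1))
    fix c' assume "c' \<in> S" "dist c' c < d"
    then have cc: "\<forall>t\<le>T. \<bar>w j h c' t - w j h c t\<bar> < e'" using d by (simp add: dist_real_def)
    have cw: "continuous_on {0..\<eta>} (w j h c'')" for c''
      by (rule continuous_on_subset[OF lipT_cont[OF w_lip[OF assms] Lc]]) (use eta in auto)
    have "integral {0..\<eta>} (\<lambda>t. w j h c' t - w j h c t) = integral {0..\<eta>} (w j h c') - integral {0..\<eta>} (w j h c)"
      by (rule integral_diff) (use cw integrable_continuous_interval in blast)+
    moreover have "norm (integral {0..\<eta>} (\<lambda>t. w j h c' t - w j h c t)) \<le> e' * (\<eta> - 0)"
    proof (rule integral_bound)
      show "continuous_on {0..\<eta>} (\<lambda>t. w j h c' t - w j h c t)" using cw by (intro continuous_on_diff)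
      fix t assume "t \<in> {0..\<eta>}"
      then have "t \<le> T" using eta by auto
      then show "norm (w j h c' t - w j h c t) \<le> e'" using cc by (simp add: less_imp_le)
    qed (use eta in auto)
    ultimately have I: "\<bar>integral {0..\<eta>} (w j h c') - integral {0..\<eta>} (w j h c)\<bar> \<le> e' * \<eta>" by simp
    have "\<bar>\<alpha> * integral {0..\<eta>} (w j h c') - \<alpha> * integral {0..\<eta>} (w j h c)\<bar> \<le> \<alpha> * (e' * \<eta>)"
      using I alpha by (simp add: right_diff_distrib[symmetric] abs_mult mult_left_mono)
    moreover have "\<bar>w j h c' T - w j h c T\<bar> < e'" using cc by simp
    moreover have "e' + \<alpha> * (e' * \<eta>) < e"
    proof -
      have "e' + \<alpha> * (e' * \<eta>) = e' * (\<alpha> * \<eta> + 1)" by (simp add: algebra_simps)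
      also have "\<dots> = e / 2" unfolding e'_def using ae by (simp add: field_simps)
      finally show ?thesis using e by simp
    qed
    ultimately show "dist (gS (w j h c')) (gS (w j h c)) < e"
      unfolding gS_def dist_real_def by arith
  qed
qed

end


context bvp begin

theorem main:
  assumes cs: "0 < cs" "cs \<le> R"
    and small: "\<And>h u. h \<ge> 0 \<Longrightarrow> Sol h cs u \<Longrightarrow> gS u > 0"
    and large: "\<And>h u. h \<ge> 0 \<Longrightarrow> Sol h R u \<Longrightarrow> gS u < 0"
  shows "\<exists>u. positive_solution_P T \<eta> \<alpha> a f u"
proof -
  define hh where "hh = (\<lambda>n::nat. T / real (Suc n))"
  have hh: "hh n > 0" for n unfolding hh_def using T by simp
  have hh0: "hh n \<ge> 0" for n using hh[of n] by simp
  have Sw: "Sol (hh n) c (w (Suc (Suc n)) (hh n) c)" for n c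
    unfolding hh_def by (rule w_Sol) auto
  have "\<exists>c. cs \<le> c \<and> c \<le> R \<and> gS (w (Suc (Suc n)) (hh n) c) = 0" for n
  proof -
    have "continuous_on {cs..R} (\<lambda>c. gS (w (Suc (Suc n)) (hh n) c))" by (rule g_cont[OF hh0])
    moreover have "gS (w (Suc (Suc n)) (hh n) R) \<le> 0" using large[OF hh0 Sw] by (simp add: less_imp_le)
    moreover have "0 \<le> gS (w (Suc (Suc n)) (hh n) cs)" using small[OF hh0 Sw] by (simp add: less_imp_le)
    ultimately show ?thesis
      using IVT2'[where f="\<lambda>c. gS (w (Suc (Suc n)) (hh n) c)" and a=cs and b=R and y=0] cs(2) by auto
  qed
  then have "\<exists>cc. \<forall>n. cs \<le> cc n \<and> cc n \<le> R \<and> gS (w (Suc (Suc n)) (hh n) (cc n)) = 0"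
    by (intro choice allI)
  then obtain cc where ccp: "\<And>n. cs \<le> cc n" "\<And>n. cc n \<le> R" "\<And>n. gS (w (Suc (Suc n)) (hh n) (cc n)) = 0"
    by blast
  define U where "U = (\<lambda>n. w (Suc (Suc n)) (hh n) (cc n))"
  have SU: "Sol (hh n) (cc n) (U n)" for n unfolding U_def by (rule Sw)
  have gU: "gS (U n) = 0" for n unfolding U_def by (rule ccp(3))
  have lipU: "lipT T Lc (U n)" for n using SU[of n] unfolding Sol_def by blast
  have Ubd: "0 \<le> U n x \<and> U n x \<le> R" if "x \<in> {0..T}" for n x
  proof -
    have "U n T \<ge> 0" "U n x \<ge> U n T" using Sol_pos[OF SU hh0] gU that by auto
    moreover have "U n x \<le> cc n" using Sol_le_c[OF SU hh0] that by auto
    ultimately show ?thesis using ccp(2)[of n] by linarith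
  qed
  have AA: "\<exists>v k. continuous_on {0..T} v \<and> strict_mono (k :: nat \<Rightarrow> nat) \<and>
      (\<forall>e>0. \<exists>N. \<forall>n x. N \<le> n \<and> x \<in> {0..T} \<longrightarrow> norm (U (k n) x - v x) < e)"
  proof (rule Arzela_Ascoli[of "{0..T}" U R])
    show "compact {0..T::real}" by simp
    show "\<And>n x. x \<in> {0..T} \<Longrightarrow> norm (U n x) \<le> R" using Ubd by fastforce
    show "\<exists>d>0. \<forall>n y. y \<in> {0..T} \<and> norm (x - y) < d \<longrightarrow> norm (U n x - U n y) < e"
      if "x \<in> {0..T}" "0 < e" for x e
    proof (intro exI[of _ "e / (Lc + 1)"] conjI allI impI)
      show "0 < e / (Lc + 1)" using that Lc by simp
      fix n y assume y: "y \<in> {0..T} \<and> norm (x - y) < e / (Lc + 1)"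
      have "\<bar>U n x - U n y\<bar> \<le> Lc * \<bar>x - y\<bar>" using lipU[of n] y that unfolding lipT_def by auto
      also have "\<dots> \<le> Lc * (e / (Lc + 1))" using y Lc by (intro mult_left_mono) auto
      also have "\<dots> < e" using Lc that by (simp add: field_simps)
      finally show "norm (U n x - U n y) < e" by simp
    qed
    show "\<exists>v k. continuous_on {0..T} v \<and> strict_mono (k :: nat \<Rightarrow> nat) \<and>
      (\<forall>e>0. \<exists>N. \<forall>n x. N \<le> n \<and> x \<in> {0..T} \<longrightarrow> norm (U (k n) x - v x) < e)"
      if "continuous_on {0..T} g" "strict_mono (k :: nat \<Rightarrow> nat)"
         "\<And>e. 0 < e \<Longrightarrow> \<exists>N. \<forall>n x. N \<le> n \<and> x \<in> {0..T} \<longrightarrow> norm (U (k n) x - g x) < e" for g k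
      using that by blast
  qed
  then obtain v k where v: "continuous_on {0..T} v" and k: "strict_mono (k :: nat \<Rightarrow> nat)"
    and conv: "\<And>e. e > 0 \<Longrightarrow> \<exists>N. \<forall>n x. N \<le> n \<and> x \<in> {0..T} \<longrightarrow> norm (U (k n) x - v x) < e"
    by blast
  have kn: "n \<le> k n" for n using seq_suble[OF k] .
  have lim_pt: "(\<lambda>n. U (k n) x) \<longlonglongrightarrow> v x" if x: "x \<in> {0..T}" for x
  proof (rule LIMSEQ_I)
    fix r :: real assume "r > 0"
    then obtain N where "\<forall>n x. N \<le> n \<and> x \<in> {0..T} \<longrightarrow> norm (U (k n) x - v x) < r" using conv by blast
    then show "\<exists>no. \<forall>n\<ge>no. norm (U (k n) x - v x) < r" using x by blast
  qed
  define c0 where "c0 = v 0"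
  have U0: "U n 0 = cc n" for n using SU[of n] unfolding Sol_def by simp
  have cclim: "(\<lambda>n. cc (k n)) \<longlonglongrightarrow> c0" using lim_pt[of 0] T unfolding c0_def U0 by simp
  have c0: "cs \<le> c0" "c0 \<le> R"
    using LIMSEQ_le_const[OF cclim] LIMSEQ_le_const2[OF cclim] ccp(1,2) by blast+
  define y where "y = (\<lambda>s. a s * F (v s))"
  have cFv: "continuous_on {0..T} (\<lambda>s. F (v s))" by (rule continuous_on_compose2[OF F_cont v]) auto
  have cy: "continuous_on {0..T} y" unfolding y_def using ac cFv by (intro continuous_intros)
  have ybd: "\<And>s. s \<in> {0..T} \<Longrightarrow> \<bar>y s\<bar> \<le> A * Mf" unfolding y_def by (rule y_bound)
  define u where "u = (\<lambda>t. c0 - Pp y t)"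
  define yn where "yn = (\<lambda>n s. a s * F (U (k n) (s - hh (k n))))"
  have cyn: "continuous_on {0..T} (yn n)" for n unfolding yn_def by (rule Sol_y[OF SU hh0])
  have Ueq: "U (k n) t = cc (k n) - Pp (yn n) t" if "t \<in> {0..T}" for n t
    using SU[of "k n"] that unfolding Sol_def yn_def by blast
  have key: "(\<lambda>n. Pp (yn n) t) \<longlonglongrightarrow> Pp y t" if t: "t \<in> {0..T}" for t
  proof (rule LIMSEQ_I)
    fix e :: real assume e: "e > 0"
    define \<rho> where "\<rho> = e / (T * T * A + 1)"
    have TTA: "T * T * A \<ge> 0" using T A by simp
    have rho: "\<rho> > 0" unfolding \<rho>_def using e TTA by (intro divide_pos_pos) auto
    have rho2: "T * (A * \<rho>) * T < e"
    proof -
      have "T * (A * \<rho>) * T = (T * T * A) * e / (T * T * A + 1)" unfolding \<rho>_def by simp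
      also have "\<dots> < (T * T * A + 1) * e / (T * T * A + 1)"
        using e TTA by (intro divide_strict_right_mono mult_strict_right_mono) auto
      also have "\<dots> = e" using TTA by simp
      finally show ?thesis .
    qed
    obtain d where d: "d > 0" "\<forall>x x'. \<bar>x - x'\<bar> < d \<longrightarrow> \<bar>F x - F x'\<bar> < \<rho>" using F_uc[OF rho] by blast
    obtain N1 where N1: "\<forall>n x. N1 \<le> n \<and> x \<in> {0..T} \<longrightarrow> norm (U (k n) x - v x) < d / 2"
      using conv[of "d/2"] d by auto
    obtain N2 :: nat where N2: "2 * Lc * T / d < real N2" using reals_Archimedean2 by blast
    show "\<exists>no. \<forall>n\<ge>no. norm (Pp (yn n) t - Pp y t) < e"
    proof (intro exI[of _ "max N1 N2"] allI impI)
      fix n assume n: "max N1 N2 \<le> n"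
      have hk: "Lc * hh (k n) < d / 2"
      proof -
        have m: "real (Suc (k n)) > 2 * Lc * T / d" using N2 n kn[of n] by linarith
        have "Lc * T < d / 2 * real (Suc (k n))"
        proof -
          have "d / 2 * (2 * Lc * T / d) = Lc * T" using d by simp
          moreover have "d / 2 * (2 * Lc * T / d) < d / 2 * real (Suc (k n))" using m d by (intro mult_strict_left_mono) auto
          ultimately show ?thesis by simp
        qed
        then show ?thesis unfolding hh_def by (simp add: pos_divide_less_eq mult.commute)
      qed
      have bd: "\<bar>yn n s - y s\<bar> \<le> A * \<rho>" if s: "s \<in> {0..T}" for s
      proof -
        have sT: "s - hh (k n) \<le> T" "s \<le> T" using s hh0[of "k n"] by auto
        have "\<bar>U (k n) (s - hh (k n)) - U (k n) s\<bar> \<le> Lc * \<bar>(s - hh (k n)) - s\<bar>"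
          using lipU[of "k n", unfolded lipT_def, rule_format, OF sT] .
        also have "\<dots> = Lc * hh (k n)" using hh0[of "k n"] by simp
        finally have 1: "\<bar>U (k n) (s - hh (k n)) - U (k n) s\<bar> < d / 2" using hk by simp
        have 2: "\<bar>U (k n) s - v s\<bar> < d / 2" using N1 n s by auto
        have "\<bar>U (k n) (s - hh (k n)) - v s\<bar> < d" using 1 2 by linarith
        then have "\<bar>F (U (k n) (s - hh (k n))) - F (v s)\<bar> < \<rho>" using d by blast
        then have "\<bar>a s\<bar> * \<bar>F (U (k n) (s - hh (k n))) - F (v s)\<bar> \<le> A * \<rho>"
          using A apos s by (intro mult_mono) auto
        then show ?thesis unfolding yn_def y_def by (simp add: abs_mult right_diff_distrib[symmetric])
      qed
      have "\<bar>Pp (\<lambda>s. yn n s - y s) t\<bar> \<le> T * (A * \<rho>) * t"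
        using Pp_bound[of T "\<lambda>s. yn n s - y s" "A * \<rho>" t] cy cyn[of n] bd t by (auto intro!: continuous_intros)
      also have "\<dots> \<le> T * (A * \<rho>) * T" using t T A rho by (intro mult_left_mono) auto
      also have "\<dots> < e" by (rule rho2)
      finally have "\<bar>Pp (\<lambda>s. yn n s - y s) t\<bar> < e" .
      moreover have "Pp (\<lambda>s. yn n s - y s) t = Pp (yn n) t - Pp y t" using Pp_diff[OF cyn cy] t by auto
      ultimately show "norm (Pp (yn n) t - Pp y t) < e" by simp
    qed
  qed
  have vu: "v t = u t" if t: "t \<in> {0..T}" for t
  proof -
    have "(\<lambda>n. cc (k n) - Pp (yn n) t) \<longlonglongrightarrow> c0 - Pp y t" by (intro tendsto_diff cclim key t)
    then have "(\<lambda>n. U (k n) t) \<longlonglongrightarrow> u t" using Ueq[OF t] unfolding u_def by simp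
    then show ?thesis using lim_pt[OF t] LIMSEQ_unique by blast
  qed
  have cU: "continuous_on {0..\<eta>} (U n)" for n
    by (rule continuous_on_subset[OF Sol_cont[OF SU]]) (use eta in auto)
  have cv: "continuous_on {0..\<eta>} v" by (rule continuous_on_subset[OF v]) (use eta in auto)
  have limI: "(\<lambda>n. integral {0..\<eta>} (U (k n))) \<longlonglongrightarrow> integral {0..\<eta>} v"
  proof (rule LIMSEQ_I)
    fix e :: real assume e: "e > 0"
    have e1: "e / (\<eta> + 1) > 0" using e eta by simp
    obtain N where N: "\<forall>n x. N \<le> n \<and> x \<in> {0..T} \<longrightarrow> norm (U (k n) x - v x) < e / (\<eta> + 1)"
      using conv[OF e1] by blast
    show "\<exists>no. \<forall>n\<ge>no. norm (integral {0..\<eta>} (U (k n)) - integral {0..\<eta>} v) < e"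
    proof (intro exI[of _ N] allI impI)
      fix n assume n: "N \<le> n"
      have "integral {0..\<eta>} (\<lambda>x. U (k n) x - v x) = integral {0..\<eta>} (U (k n)) - integral {0..\<eta>} v"
        by (rule integral_diff) (use cU cv integrable_continuous_interval in blast)+
      moreover have "norm (integral {0..\<eta>} (\<lambda>x. U (k n) x - v x)) \<le> e / (\<eta> + 1) * (\<eta> - 0)"
      proof (rule integral_bound)
        show "continuous_on {0..\<eta>} (\<lambda>x. U (k n) x - v x)" using cU cv by (intro continuous_on_diff)
        fix x assume "x \<in> {0..\<eta>}"
        then have "x \<in> {0..T}" using eta by auto
        then show "norm (U (k n) x - v x) \<le> e / (\<eta> + 1)" using N n by (simp add: less_imp_le)
      qed (use eta in auto)
      moreover have "e / (\<eta> + 1) * (\<eta> - 0) < e" using e eta by (simp add: field_simps)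
      ultimately show "norm (integral {0..\<eta>} (U (k n)) - integral {0..\<eta>} v) < e" by simp
    qed
  qed
  have Ivu: "integral {0..\<eta>} v = integral {0..\<eta>} u"
    by (rule integral_cong) (use vu eta in auto)
  have "(\<lambda>n. gS (U (k n))) \<longlonglongrightarrow> v T - \<alpha> * integral {0..\<eta>} v"
    unfolding gS_def by (intro tendsto_diff tendsto_mult tendsto_const lim_pt limI) (use T in auto)
  moreover have "(\<lambda>n. gS (U (k n))) \<longlonglongrightarrow> 0" by (simp add: gU)
  ultimately have "v T - \<alpha> * integral {0..\<eta>} v = 0" by (rule LIMSEQ_unique)
  then have gu: "gS u = 0" unfolding gS_def using vu[of T] T Ivu by simp
  have lipu: "lipT T Lc u" unfolding u_def by (rule Pp_lipT[OF cy ybd])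
  have Su: "Sol 0 c0 u"
    unfolding Sol_def
  proof (intro conjI allI impI ballI)
    show "lipT T Lc u" by (rule lipu)
    fix t :: real
    show "t \<le> 0 \<Longrightarrow> u t = c0" unfolding u_def by (simp add: Pp_neg)
    assume t: "t \<in> {0..T}"
    have "Pp (\<lambda>s. a s * F (u (s - 0))) t = Pp y t"
      by (rule Pp_cong) (use t vu in \<open>auto simp: y_def\<close>)
    then show "u t = c0 - Pp (\<lambda>s. a s * F (u (s - 0))) t" unfolding u_def by simp
  qed
  have uT0: "u T \<ge> 0" and umin: "\<And>t. t \<le> T \<Longrightarrow> u t \<ge> u T" using Sol_pos[OF Su _] gu by auto
  have ule: "\<And>t. t \<le> T \<Longrightarrow> u t \<le> c0" using Sol_le_c[OF Su] by auto
  have unn: "\<And>t. t \<in> {0..T} \<Longrightarrow> 0 \<le> u t" using uT0 umin by force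
  have Fu: "\<And>t. t \<in> {0..T} \<Longrightarrow> F (u t) = f (u t)" using unn ule c0 by (intro F_eq) force+
  show ?thesis
  proof (intro exI[of _ u])
    show "positive_solution_P T \<eta> \<alpha> a f u"
      unfolding positive_solution_P_def
    proof (intro conjI)
      show "\<exists>u1 u2. C2_with T u u1 u2 \<and> (\<forall>t. 0 < t \<and> t < T \<longrightarrow> u2 t + a t * f (u t) = 0) \<and>
            u1 0 = 0 \<and> u T = \<alpha> * integral {0..\<eta>} u"
      proof (rule exI[of _ "\<lambda>t. - Ii y t"], rule exI[of _ "\<lambda>t. - y t"], intro conjI allI impI)
        show "C2_with T u (\<lambda>t. - Ii y t) (\<lambda>t. - y t)"
          unfolding C2_with_def
        proof (intro conjI ballI)
          fix t :: real assume t: "t \<in> {0..T}"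
          have "((\<lambda>t. c0 - Pp y t) has_real_derivative (0 - Ii y t)) (at t within {0..T})"
            by (intro DERIV_diff DERIV_const Pp_deriv[OF cy t])
          then show "(u has_real_derivative - Ii y t) (at t within {0..T})" unfolding u_def by simp
          show "((\<lambda>t. - Ii y t) has_real_derivative - y t) (at t within {0..T})"
            by (intro DERIV_minus Ii_deriv[OF cy t])
        next
          show "continuous_on {0..T} (\<lambda>t. - y t)" using cy by (intro continuous_intros)
        qed
        fix t :: real assume t: "0 < t \<and> t < T"
        then have t': "t \<in> {0..T}" by auto
        show "- y t + a t * f (u t) = 0" unfolding y_def using vu[OF t'] Fu[OF t'] by simp
      next
        show "- Ii y 0 = 0" by (simp add: Ii_neg)
        show "u T = \<alpha> * integral {0..\<eta>} u" using gu unfolding gS_def by simp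
      qed
      show "\<forall>t\<in>{0..T}. 0 \<le> u t" using unn by blast
      have "u 0 = c0" unfolding u_def by (simp add: Pp_neg)
      then show "\<exists>t\<in>{0..T}. u t \<noteq> 0" using c0 cs T by (intro bexI[of _ 0]) auto
    qed
  qed
qed

end


theorem corollary5p2:
  fixes T \<eta> \<alpha> \<alpha>1 \<beta>1 \<theta>1 \<theta>2 t0 :: real and f a :: "real \<Rightarrow> real"
  assumes "T > 0" and "0 < \<eta>" and "\<eta> < T" and "0 < \<alpha>" and "\<alpha> < 1 / \<eta>"
    and "continuous_on {0..} f" and "\<forall>x\<ge>0. f x \<ge> 0"
    and "continuous_on {0..T} a" and "\<forall>t\<in>{0..T}. a t \<ge> 0"
    and "t0 \<in> {0..T}" and "a t0 > 0"
    and "((\<lambda>x. f x / x) \<longlongrightarrow> \<alpha>1) (at_right 0)"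
    and "0 < \<theta>1" and "\<theta>1 \<le> 1" and "0 \<le> \<alpha>1" and "\<alpha>1 < \<theta>1 * Lambda1 T \<eta> \<alpha> a"
    and "((\<lambda>x. f x / x) \<longlongrightarrow> \<beta>1) at_top"
    and "\<theta>2 \<ge> 1" and "\<beta>1 > \<theta>2 / gamma_c T \<eta> \<alpha> * Lambda2 T \<eta> \<alpha> a"
  shows "\<exists>u. positive_solution_P T \<eta> \<alpha> a f u"
proof -
  note T = assms(1) and eta = assms(2,3) and alpha0 = assms(4)
  have ae: "\<alpha> * \<eta> < 1" using assms(2,5) by (simp add: pos_less_divide_eq)
  define \<gamma> where "\<gamma> = gamma_c T \<eta> \<alpha>"
  have den: "T - \<alpha> * \<eta>^2 > 0"
  proof -
    have "\<alpha> * \<eta>^2 = (\<alpha> * \<eta>) * \<eta>" by (simp add: power2_eq_square)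
    also have "\<dots> < 1 * \<eta>" using ae eta by (intro mult_strict_right_mono) auto
    finally show ?thesis using eta by simp
  qed
  have gpos: "\<gamma> > 0" unfolding \<gamma>_def gamma_c_def using den alpha0 eta by (intro divide_pos_pos mult_pos_pos) auto
  have gle: "\<gamma> \<le> 1"
  proof -
    have "\<alpha> * \<eta> * (T - \<eta>) \<le> T - \<alpha> * \<eta>^2"
    proof -
      have "\<alpha> * \<eta> * T \<le> 1 * T" using ae T by (intro mult_right_mono) auto
      then show ?thesis by (simp add: algebra_simps power2_eq_square)
    qed
    then show ?thesis unfolding \<gamma>_def gamma_c_def using den by (simp add: pos_divide_le_eq)
  qed
  obtain t1 where t1: "t1 \<in> {0..T}" "t1 < T" "a t1 > 0"
  proof (cases "t0 < T")
    case True then show ?thesis using that assms(10,11) by auto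
  next
    case False
    then have t0T: "t0 = T" using assms(10) by auto
    have "T \<in> {0..T}" using T by auto
    have aT: "a T / 2 > 0" using assms(11) t0T by simp
    have "\<forall>x\<in>{0..T}. \<forall>e>0. \<exists>d>0. \<forall>x'\<in>{0..T}. dist x' x < d \<longrightarrow> dist (a x') (a x) < e"
      using assms(8) unfolding continuous_on_iff .
    then obtain d where d: "d > 0" "\<forall>t\<in>{0..T}. dist t T < d \<longrightarrow> dist (a t) (a T) < a T / 2"
      using \<open>T \<in> {0..T}\<close> aT by blast
    define t1 where "t1 = max (T / 2) (T - d / 2)"
    have "t1 \<in> {0..T}" "t1 < T" "dist t1 T < d" unfolding t1_def using T d(1) by (auto simp: dist_real_def)
    then have h: "dist (a t1) (a T) < a T / 2" using d(2) by blast
    then have "a t1 > 0" using aT unfolding dist_real_def by arith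
    then show ?thesis using that \<open>t1 \<in> {0..T}\<close> \<open>t1 < T\<close> by blast
  qed
  have apos: "\<And>t. t \<in> {0..T} \<Longrightarrow> a t \<ge> 0" using assms(9) by blast
  define K1 where "K1 = integral {0..T} (\<lambda>s. (T - s) * a s)"
  have K1: "K1 > 0" unfolding K1_def
  proof (rule integral_pos_cont)
    show "continuous_on {0..T} (\<lambda>s. (T - s) * a s)" by (intro continuous_intros assms(8))
    show "\<And>x. x \<in> {0..T} \<Longrightarrow> 0 \<le> (T - x) * a x" using apos by (auto intro!: mult_nonneg_nonneg)
    show "0 < (T - t1) * a t1" using t1 by simp
  qed (use t1 T in auto)
  define Ea where "Ea = integral {\<eta>..T} (\<lambda>s. (T - s) * a s) + 1/2 * integral {0..\<eta>} (\<lambda>s. (2 * (T - \<eta>) + \<alpha> * (\<eta>^2 - s^2)) * a s)"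
  have kern: "2 * (T - \<eta>) + \<alpha> * (\<eta>^2 - s^2) > 0" if "s \<in> {0..\<eta>}" for s
  proof -
    have "s^2 \<le> \<eta>^2" using that by (intro power_mono) auto
    then show ?thesis using eta alpha0 by (intro add_pos_nonneg mult_nonneg_nonneg) auto
  qed
  have ca1: "continuous_on {\<eta>..T} a" by (rule continuous_on_subset[OF assms(8)]) (use eta in auto)
  have ca2: "continuous_on {0..\<eta>} a" by (rule continuous_on_subset[OF assms(8)]) (use eta in auto)
  have c1: "continuous_on {\<eta>..T} (\<lambda>s. (T - s) * a s)" by (intro continuous_intros ca1)
  have c2: "continuous_on {0..\<eta>} (\<lambda>s. (2 * (T - \<eta>) + \<alpha> * (\<eta>^2 - s^2)) * a s)" by (intro continuous_intros ca2)
  have E1: "integral {\<eta>..T} (\<lambda>s. (T - s) * a s) \<ge> 0"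
  proof (rule integral_nonneg[OF integrable_continuous_interval[OF c1]])
    fix x assume x: "x \<in> {\<eta>..T}"
    then have "a x \<ge> 0" using apos eta by auto
    then show "0 \<le> (T - x) * a x" using x by simp
  qed
  have E2: "integral {0..\<eta>} (\<lambda>s. (2 * (T - \<eta>) + \<alpha> * (\<eta>^2 - s^2)) * a s) \<ge> 0"
  proof (rule integral_nonneg[OF integrable_continuous_interval[OF c2]])
    fix x assume x: "x \<in> {0..\<eta>}"
    then have "a x \<ge> 0" using apos eta by auto
    moreover have "2 * (T - \<eta>) + \<alpha> * (\<eta>^2 - x^2) > 0" using kern x by blast
    ultimately show "0 \<le> (2 * (T - \<eta>) + \<alpha> * (\<eta>^2 - x^2)) * a x" by simp
  qed
  have Ea: "Ea > 0"
  proof (cases "t1 \<ge> \<eta>")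
    case True
    have "integral {\<eta>..T} (\<lambda>s. (T - s) * a s) > 0"
      by (rule integral_pos_cont[OF c1, of t1]) (use apos eta t1 True in auto)
    then show ?thesis unfolding Ea_def using E2 by simp
  next
    case False
    have "integral {0..\<eta>} (\<lambda>s. (2 * (T - \<eta>) + \<alpha> * (\<eta>^2 - s^2)) * a s) > 0"
    proof (rule integral_pos_cont[OF c2, of t1])
      show "0 < (2 * (T - \<eta>) + \<alpha> * (\<eta>^2 - t1^2)) * a t1" using kern[of t1] t1 False by auto
      fix x assume "x \<in> {0..\<eta>}"
      then show "0 \<le> (2 * (T - \<eta>) + \<alpha> * (\<eta>^2 - x^2)) * a x" using kern[of x] apos[of x] eta by auto
    qed (use t1 False eta in auto)
    then show ?thesis unfolding Ea_def using E1 by simp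
  qed
  have L1: "Lambda1 T \<eta> \<alpha> a = (1 - \<alpha> * \<eta>) / K1" unfolding Lambda1_def K1_def ..
  have L2: "Lambda2 T \<eta> \<alpha> a = (1 - \<alpha> * \<eta>) / (\<gamma> * Ea)" unfolding Lambda2_def Ea_def \<gamma>_def ..
  have L1pos: "Lambda1 T \<eta> \<alpha> a > 0" unfolding L1 using ae K1 by simp
  have L2pos: "Lambda2 T \<eta> \<alpha> a > 0" unfolding L2 using ae gpos Ea by simp
  have "\<theta>2 / \<gamma> \<ge> 1" using assms(18) gle gpos by (simp add: pos_le_divide_eq)
  then have "\<theta>2 / \<gamma> * Lambda2 T \<eta> \<alpha> a \<ge> 1 * Lambda2 T \<eta> \<alpha> a" using L2pos by (intro mult_right_mono) auto
  then have bL: "\<beta>1 > Lambda2 T \<eta> \<alpha> a" using assms(19) unfolding \<gamma>_def by simp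
  define b where "b = (\<beta>1 + Lambda2 T \<eta> \<alpha> a) / 2"
  have b: "b > Lambda2 T \<eta> \<alpha> a" "b < \<beta>1" "b \<ge> 0" using bL L2pos unfolding b_def by auto
  have bE: "b * \<gamma> * Ea > 1 - \<alpha> * \<eta>"
  proof -
    have "(1 - \<alpha> * \<eta>) / (\<gamma> * Ea) < b" using b(1) unfolding L2 .
    then have "1 - \<alpha> * \<eta> < b * (\<gamma> * Ea)" using gpos Ea by (simp add: pos_divide_less_eq)
    then show ?thesis by (simp add: mult.assoc)
  qed
  have "eventually (\<lambda>x. b < f x / x) at_top" using order_tendstoD(1)[OF assms(17) b(2)] .
  then obtain M0 where M0: "\<And>x. x \<ge> M0 \<Longrightarrow> b < f x / x" unfolding eventually_at_top_linorder by blast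
  define M where "M = max M0 1"
  have M: "M > 0" unfolding M_def by simp
  have fb: "f z \<ge> b * z" if "z \<ge> M" for z
  proof -
    have "z > 0" "b < f z / z" using that M M0[of z] unfolding M_def by auto
    then show ?thesis by (simp add: pos_less_divide_eq less_imp_le)
  qed
  define C where "C = M / \<gamma>"
  have C: "C > 0" "M \<le> \<gamma> * C" unfolding C_def using M gpos by auto
  have "\<alpha>1 < Lambda1 T \<eta> \<alpha> a"
  proof -
    have "\<theta>1 * Lambda1 T \<eta> \<alpha> a \<le> 1 * Lambda1 T \<eta> \<alpha> a" using assms(14) L1pos by (intro mult_right_mono) auto
    then show ?thesis using assms(16) by simp
  qed
  define k where "k = (\<alpha>1 + Lambda1 T \<eta> \<alpha> a) / 2"
  have k: "k > \<alpha>1" "k < Lambda1 T \<eta> \<alpha> a" "k \<ge> 0" unfolding k_def using \<open>\<alpha>1 < Lambda1 T \<eta> \<alpha> a\<close> assms(15) by auto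
  have kK: "k * K1 < 1 - \<alpha> * \<eta>" using k(2) unfolding L1 using K1 by (simp add: pos_less_divide_eq)
  have "eventually (\<lambda>x. f x / x < k) (at_right 0)" using order_tendstoD(2)[OF assms(12) k(1)] .
  then obtain \<delta> where \<delta>: "\<delta> > 0" "\<And>x. x > 0 \<Longrightarrow> x < \<delta> \<Longrightarrow> f x / x < k"
    unfolding eventually_at_right_field by auto
  have f0: "f 0 = 0"
  proof -
    have "(f \<longlongrightarrow> f 0) (at 0 within {0..})" using assms(6) unfolding continuous_on_def by auto
    then have 1: "(f \<longlongrightarrow> f 0) (at_right 0)" by (rule tendsto_mono[rotated]) (rule at_le, auto)
    have "((\<lambda>x. x * (f x / x)) \<longlongrightarrow> 0 * \<alpha>1) (at_right 0)" by (intro tendsto_mult tendsto_ident_at assms(12))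
    moreover have "eventually (\<lambda>x. x * (f x / x) = f x) (at_right (0::real))"
      unfolding eventually_at_right_field by (intro exI[of _ 1]) auto
    ultimately have 2: "(f \<longlongrightarrow> 0) (at_right 0)" using tendsto_cong by (metis mult_zero_left)
    show ?thesis using tendsto_unique[OF _ 1 2] by simp
  qed
  define cs where "cs = min (\<delta> / 2) C"
  have cs: "0 < cs" "cs \<le> C" unfolding cs_def using \<delta> C by auto
  have fk: "f z \<le> k * z" if "z \<in> {0..cs}" for z
  proof (cases "z = 0")
    case True then show ?thesis using f0 by simp
  next
    case False
    then have "z > 0" "z < \<delta>" using that \<delta> unfolding cs_def by auto
    then show ?thesis using \<delta>(2)[of z] by (simp add: pos_divide_less_eq less_imp_le)
  qed
  interpret bvp T \<eta> \<alpha> a f C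
  proof
    show "T > 0" "0 < \<eta>" "\<eta> < T" "0 < \<alpha>" "\<alpha> * \<eta> < 1" "continuous_on {0..} f" "continuous_on {0..T} a" "C > 0"
      using assms(1-4,6,8) ae C by auto
    show "\<And>x. x \<ge> 0 \<Longrightarrow> f x \<ge> 0" using assms(7) by blast
    show "\<And>t. t \<in> {0..T} \<Longrightarrow> a t \<ge> 0" using assms(9) by blast
  qed
  show ?thesis
  proof (rule main[OF cs])
    fix h u assume "h \<ge> 0" "Sol h cs u"
    then show "gS u > 0" using Sol_small[of h cs u k] cs C k(3) fk kK unfolding K1_def by blast
  next
    fix h u assume "h \<ge> 0" "Sol h C u"
    then show "gS u < 0" using Sol_large[of h C u M b Ea] C b(3) fb bE Ea_def unfolding \<gamma>_def by blast
  qed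
qed


end
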